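(* Let $r\ge 3$ and $1\le \ell\le r-2$, let $G(r,\ell)$ be the graph obtained from $K_r\circ K_1$ by deleting $r-\ell$ leaves, and let $L$ denote the set of leaves of $G(r,\ell)$. Then $T\subseteq V(G(r,\ell))$ is a $\gamma_P$-irrelevant set of $G(r,\ell)$ if and only if $T\subseteq L$.
   Context: $K_r\circ K_1$ is the corona: $K_r$ with one pendant leaf attached to each vertex. Zero forcing: starting with a set $S$ of blue vertices, a blue vertex $v$ may turn blue a white vertex $w$ if $w$ is the only white neighbor of $v$; $S$ is a zero forcing set if repeated application colors all vertices blue. A set $S\subseteq V(G)$ is a power dominating set if its closed neighborhood $N[S]=\bigcup_{x\in S}(\{x\}\cup N(x))$ is a zero forcing set of $G$. A vertex is $\gamma_P$-irrelevant if it belongs to no minimal (under inclusion) power dominating set; a set is $\gamma_P$-irrelevant if all its vertices are. *)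

theory Defs
  imports Main
begin

(* A graph is given by a vertex set V and a symmetric irreflexive adjacency relation E. *)

definition nbhd :: "'a set \<Rightarrow> ('a \<Rightarrow> 'a \<Rightarrow> bool) \<Rightarrow> 'a \<Rightarrow> 'a set" where
  "nbhd V E v = {u \<in> V. E v u}"

inductive_set zf_closure :: "'a set \<Rightarrow> ('a \<Rightarrow> 'a \<Rightarrow> bool) \<Rightarrow> 'a set \<Rightarrow> 'a set"
  for V E S where
  init: "x \<in> S \<Longrightarrow> x \<in> V \<Longrightarrow> x \<in> zf_closure V E S"
| force: "v \<in> zf_closure V E S \<Longrightarrow> w \<in> nbhd V E v \<Longrightarrow>
          (\<forall>u \<in> nbhd V E v - {w}. u \<in> zf_closure V E S) \<Longrightarrow> w \<in> zf_closure V E S"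

definition zero_forcing_set :: "'a set \<Rightarrow> ('a \<Rightarrow> 'a \<Rightarrow> bool) \<Rightarrow> 'a set \<Rightarrow> bool" where
  "zero_forcing_set V E S \<longleftrightarrow> S \<subseteq> V \<and> zf_closure V E S = V"

definition closed_nbhd_set :: "'a set \<Rightarrow> ('a \<Rightarrow> 'a \<Rightarrow> bool) \<Rightarrow> 'a set \<Rightarrow> 'a set" where
  "closed_nbhd_set V E S = (\<Union>x\<in>S. {x} \<union> nbhd V E x)"

definition power_dominating_set :: "'a set \<Rightarrow> ('a \<Rightarrow> 'a \<Rightarrow> bool) \<Rightarrow> 'a set \<Rightarrow> bool" where
  "power_dominating_set V E S \<longleftrightarrow> S \<subseteq> V \<and> zero_forcing_set V E (closed_nbhd_set V E S)"

definition minimal_pds :: "'a set \<Rightarrow> ('a \<Rightarrow> 'a \<Rightarrow> bool) \<Rightarrow> 'a set \<Rightarrow> bool" where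
  "minimal_pds V E S \<longleftrightarrow> power_dominating_set V E S \<and>
     (\<forall>S'. S' \<subset> S \<longrightarrow> \<not> power_dominating_set V E S')"

definition gammaP_irrelevant_vertex :: "'a set \<Rightarrow> ('a \<Rightarrow> 'a \<Rightarrow> bool) \<Rightarrow> 'a \<Rightarrow> bool" where
  "gammaP_irrelevant_vertex V E v \<longleftrightarrow> v \<in> V \<and> \<not> (\<exists>S. minimal_pds V E S \<and> v \<in> S)"

definition gammaP_irrelevant_set :: "'a set \<Rightarrow> ('a \<Rightarrow> 'a \<Rightarrow> bool) \<Rightarrow> 'a set \<Rightarrow> bool" where
  "gammaP_irrelevant_set V E T \<longleftrightarrow> T \<subseteq> V \<and> (\<forall>v\<in>T. gammaP_irrelevant_vertex V E v)"

(* G(r,l): K_r on vertices Inl 0..Inl (r-1); leaves Inr i attached to Inl i for i < l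
   (i.e. K_r o K_1 with the r - l leaves of Inl l, ..., Inl (r-1) deleted). *)
definition G_V :: "nat \<Rightarrow> nat \<Rightarrow> (nat + nat) set" where
  "G_V r l = Inl ` {..<r} \<union> Inr ` {..<l}"

fun G_E :: "nat \<Rightarrow> nat \<Rightarrow> (nat + nat) \<Rightarrow> (nat + nat) \<Rightarrow> bool" where
  "G_E r l (Inl i) (Inl j) \<longleftrightarrow> i < r \<and> j < r \<and> i \<noteq> j"
| "G_E r l (Inl i) (Inr j) \<longleftrightarrow> i = j \<and> j < l"
| "G_E r l (Inr i) (Inl j) \<longleftrightarrow> i = j \<and> i < l"
| "G_E r l (Inr i) (Inr j) \<longleftrightarrow> False"

definition G_leaves :: "nat \<Rightarrow> nat \<Rightarrow> (nat + nat) set" where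
  "G_leaves r l = Inr ` {..<l}"

end

theory Submission
  imports Defs
begin

lemma zf_empty: "zf_closure V E {} = {}"
proof -
  have "x \<in> zf_closure V E {} \<Longrightarrow> False" for x
    by (induction rule: zf_closure.induct) auto
  thus ?thesis by auto
qed

lemma nbhd_Inl: "i < r \<Longrightarrow> nbhd (G_V r l) (G_E r l) (Inl i) =
   Inl ` ({..<r} - {i}) \<union> (if i < l then {Inr i} else {})"
proof (intro set_eqI iffI)
  fix x assume "x \<in> nbhd (G_V r l) (G_E r l) (Inl i)" "i < r"
  then show "x \<in> Inl ` ({..<r} - {i}) \<union> (if i < l then {Inr i} else {})"
    by (cases x) (auto simp: nbhd_def G_V_def)
next
  fix x assume "x \<in> Inl ` ({..<r} - {i}) \<union> (if i < l then {Inr i} else {})" "i < r"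
  then show "x \<in> nbhd (G_V r l) (G_E r l) (Inl i)"
    by (cases "i < l") (auto simp: nbhd_def G_V_def)
qed

lemma single_pds:
  assumes "i < r" "l \<le> r"
  shows "power_dominating_set (G_V r l) (G_E r l) {Inl i}"
proof -
  let ?V = "G_V r l" and ?E = "G_E r l"
  let ?N = "closed_nbhd_set ?V ?E {Inl i}"
  have N: "Inl ` {..<r} \<subseteq> ?N" using assms
    by (auto simp: closed_nbhd_set_def nbhd_Inl)
  have NV: "?N \<subseteq> ?V" using assms
    by (auto simp: closed_nbhd_set_def nbhd_def G_V_def)
  have A: "Inl ` {..<r} \<subseteq> zf_closure ?V ?E ?N"
    using N by (auto simp: G_V_def intro: zf_closure.init)
  have B: "Inr j \<in> zf_closure ?V ?E ?N" if "j < l" for j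
  proof (rule zf_closure.force[where v="Inl j"])
    show "Inl j \<in> zf_closure ?V ?E ?N" using A that assms by auto
    show "Inr j \<in> nbhd ?V ?E (Inl j)" using that by (auto simp: nbhd_def G_V_def)
    show "\<forall>u\<in>nbhd ?V ?E (Inl j) - {Inr j}. u \<in> zf_closure ?V ?E ?N"
      using A that assms by (auto simp: nbhd_Inl)
  qed
  have "zf_closure ?V ?E ?N \<subseteq> ?V"
    by (auto elim: zf_closure.cases simp: nbhd_def)
  moreover have "?V \<subseteq> zf_closure ?V ?E ?N"
    using A B by (auto simp: G_V_def)
  ultimately show ?thesis using assms NV
    by (auto simp: power_dominating_set_def zero_forcing_set_def G_V_def)
qed

lemma single_min:
  assumes "i < r" "l \<le> r"
  shows "minimal_pds (G_V r l) (G_E r l) {Inl i}"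
proof -
  have "\<not> power_dominating_set (G_V r l) (G_E r l) {}"
    using assms
    by (auto simp: power_dominating_set_def zero_forcing_set_def zf_empty
        closed_nbhd_set_def G_V_def)
  moreover have "S' \<subset> {Inl i} \<Longrightarrow> S' = {}" for S' :: "(nat+nat) set" by auto
  ultimately show ?thesis using single_pds[OF assms] unfolding minimal_pds_def by metis
qed

lemma leaves_not_pds:
  assumes "l + 2 \<le> r" "S \<subseteq> Inr ` {..<l}"
  shows "\<not> power_dominating_set (G_V r l) (G_E r l) S"
proof
  let ?V = "G_V r l" and ?E = "G_E r l"
  let ?M = "S \<union> {Inl j | j. Inr j \<in> S}"
  assume P: "power_dominating_set ?V ?E S"
  have NM: "closed_nbhd_set ?V ?E S \<subseteq> ?M"
  proof
    fix x assume "x \<in> closed_nbhd_set ?V ?E S"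
    then obtain y where y: "y \<in> S" "x = y \<or> x \<in> nbhd ?V ?E y"
      by (auto simp: closed_nbhd_set_def)
    then obtain k where "y = Inr k" using assms by auto
    with y show "x \<in> ?M" by (cases x) (auto simp: nbhd_def)
  qed
  have "x \<in> ?M" if "x \<in> zf_closure ?V ?E (closed_nbhd_set ?V ?E S)" for x
    using that
  proof (induction rule: zf_closure.induct)
    case (init x) then show ?case using NM by auto
  next
    case (force v w)
    show ?case
    proof (cases v)
      case (Inr j)
      then have "Inr j \<in> S" using force.IH by auto
      then show ?thesis using force.hyps(2) Inr by (cases w) (auto simp: nbhd_def)
    next
      case (Inl j)
      then have jS: "Inr j \<in> S" using force.IH assms by auto
      hence jl: "j < l" using assms by auto
      show ?thesis
      proof (cases w)
        case (Inr k)
        then show ?thesis using force.hyps(2) Inl jS by (auto simp: nbhd_def)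
      next
        case (Inl k)
        obtain m where m: "m \<ge> l" "m < r" "m \<noteq> k" using assms
        proof (cases "k = l")
          case True then show ?thesis using that[of "l+1"] assms by simp
        next
          case False then show ?thesis using that[of l] assms by simp
        qed
        have "Inl m \<in> nbhd ?V ?E v - {w}" using m jl \<open>v = Inl j\<close> Inl
          by (auto simp: nbhd_def G_V_def)
        then have "Inl m \<in> ?M" using force.IH by blast
        then have False using m assms by auto
        then show ?thesis ..
      qed
    qed
  qed
  moreover have "Inl l \<in> ?V" using assms by (auto simp: G_V_def)
  moreover have "Inl l \<notin> ?M" using assms by auto
  ultimately show False using P
    by (auto simp: power_dominating_set_def zero_forcing_set_def)
qed

theorem proposition2p21:
  fixes r l :: nat and T :: "(nat + nat) set"
  assumes "r \<ge> 3" and "1 \<le> l" and "l \<le> r - 2"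
    and "T \<subseteq> G_V r l"
  shows "gammaP_irrelevant_set (G_V r l) (G_E r l) T \<longleftrightarrow> T \<subseteq> G_leaves r l"
proof
  assume H: "gammaP_irrelevant_set (G_V r l) (G_E r l) T"
  show "T \<subseteq> G_leaves r l"
  proof
    fix v assume v: "v \<in> T"
    show "v \<in> G_leaves r l"
    proof (cases v)
      case (Inl i)
      then have "i < r" using v assms(4) by (auto simp: G_V_def)
      then have "minimal_pds (G_V r l) (G_E r l) {Inl i}" using single_min assms by simp
      then show ?thesis using H v Inl
        by (auto simp: gammaP_irrelevant_set_def gammaP_irrelevant_vertex_def)
    next
      case (Inr i) then show ?thesis using v assms(4) by (auto simp: G_V_def G_leaves_def)
    qed
  qed
next
  assume H: "T \<subseteq> G_leaves r l"
  have "gammaP_irrelevant_vertex (G_V r l) (G_E r l) v" if "v \<in> T" for v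
  proof -
    obtain i where v: "v = Inr i" "i < l" using H \<open>v \<in> T\<close> by (auto simp: G_leaves_def)
    have "\<not> minimal_pds (G_V r l) (G_E r l) S" if "v \<in> S" for S
    proof
      assume M: "minimal_pds (G_V r l) (G_E r l) S"
      hence SV: "S \<subseteq> G_V r l" by (auto simp: minimal_pds_def power_dominating_set_def)
      show False
      proof (cases "\<exists>j. Inl j \<in> S")
        case True
        then obtain j where j: "Inl j \<in> S" by auto
        hence "j < r" using SV by (auto simp: G_V_def)
        hence "power_dominating_set (G_V r l) (G_E r l) {Inl j}" using single_pds assms by simp
        moreover have "{Inl j} \<subset> S" using j v \<open>v \<in> S\<close> by auto
        ultimately show False using M by (auto simp: minimal_pds_def)
      next
        case False
        hence "S \<subseteq> Inr ` {..<l}" using SV by (auto simp: G_V_def)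
        then show False using leaves_not_pds[of l r S] M assms
          by (auto simp: minimal_pds_def)
      qed
    qed
    then show ?thesis using v assms by (auto simp: gammaP_irrelevant_vertex_def G_V_def)
  qed
  then show "gammaP_irrelevant_set (G_V r l) (G_E r l) T"
    using assms(4) by (auto simp: gammaP_irrelevant_set_def)
qed

end
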